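(* Let $G=(S,R,\rho)$ be a $q$-grammar such that $R(s_{i+1})=q\uparrow R(s_i)$ for every $s_i\in\mathbb{S}$, and let $\phi$ be a master-linear evaluation. Then for all $f,g\in\mathbb{E}$, \[ \phi\big(\mathrm{Gen}^{(G)}_q(fg;u)\big)=\phi\big(\mathrm{Gen}^{(G)}_q(f;u)\big)\cdot\phi\big(\mathrm{Gen}^{(G)}_q(g;u)\big). \]
   Context: $\mathbb{K}$ is a commutative ring with unity and characteristic zero, $q$ an indeterminate. For a set $S$ of master variables, $\mathbb{S}=\{s_i:s\in S,\ i\ge0\}$ is a set of non-commuting variables, $F(\mathbb{S})$ the free group on $\mathbb{S}$, $\mathbb{E}=\mathbb{K}[q][F(\mathbb{S})]$ its group algebra. A rule $R$ assigns to each $s_i$ an element $R(s_i)\in\mathbb{E}$, extended by $R(s_i^{-1})=-s_i^{-1}R(s_i)s_{i+1}^{-1}$. The up-arrow $\uparrow$ is the $\mathbb{K}[q]$-linear map replacing each letter $s_i^{\pm1}$ of a word by $s_{i+1}^{\pm1}$. An order $\rho$ is a map rewriting each word by permuting its letters, extended linearly to $\mathbb{E}$. A $q$-grammar is $(S,R,\rho)$; its $q$-derivative is the $\mathbb{K}[q]$-linear map with $D(w_1\cdots w_n)=\sum_{j=1}^n\rho\big(w_1\cdots w_{j-1}R(w_j)\uparrow(w_{j+1}\cdots w_n)\big)$ for letters $w_j\in\mathbb{S}\cup\mathbb{S}^{-1}$, $D^0=\mathrm{id}$, $D^k=D\circ D^{k-1}$. $\mathrm{Gen}^{(G)}_q(f;u)=\sum_{n\ge0}D^n(f)u^n/(q;q)_n$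 with $(q;q)_n=\prod_{i=1}^n(1-q^i)$. An evaluation is a map $\phi$ from $\mathbb{S}$ to a commutative ring $\mathbb{V}$ containing $\mathbb{K}[q]$ (with invertible values), extended to a $\mathbb{K}[q]$-linear ring morphism $\mathbb{E}\to\mathbb{V}$ with $\phi(s_i^{-1})=\phi(s_i)^{-1}$, and applied coefficientwise to power series in $u$. It is master-linear if $\phi(s_i)=\phi(s_j)$ for every $s\in S$ and all $i,j\ge0$. *)

theory Defs
  imports "HOL-Library.Poly_Mapping" "HOL-Computational_Algebra.Polynomial"
          "HOL-Computational_Algebra.Formal_Power_Series"
begin

text \<open>A letter s_i^{+1} is (s, i, True), a letter s_i^{-1} is (s, i, False).
  Elements of the free group F(SS) are represented by reduced words.\<close>

type_synonym 's letter = "'s \<times> nat \<times> bool"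

fun inv_letter :: "'s letter \<Rightarrow> 's letter" where
  "inv_letter (s, i, b) = (s, i, \<not> b)"

fun reduced :: "'s letter list \<Rightarrow> bool" where
  "reduced [] = True"
| "reduced [x] = True"
| "reduced (x # y # ys) = (y \<noteq> inv_letter x \<and> reduced (y # ys))"

fun red :: "'s letter list \<Rightarrow> 's letter list" where
  "red [] = []"
| "red (x # xs) = (case red xs of
       [] \<Rightarrow> [x]
     | y # ys \<Rightarrow> (if y = inv_letter x then ys else x # y # ys))"

text \<open>Elements of EE: finitely supported maps from words to K[q] whose support
  consists of reduced words.\<close>
type_synonym ('s, 'k) galg = "'s letter list \<Rightarrow>\<^sub>0 'k poly"

definition galg_carrier :: "('s, 'k::comm_ring_1) galg set" where
  "galg_carrier = {f. \<forall>w \<in> Poly_Mapping.keys f. reduced w}"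

definition basis :: "'s letter list \<Rightarrow> ('s, 'k::comm_ring_1) galg" where
  "basis w = Poly_Mapping.single (red w) 1"

definition escale :: "'k::comm_ring_1 poly \<Rightarrow> ('s, 'k) galg \<Rightarrow> ('s, 'k) galg" where
  "escale a f = Poly_Mapping.map (\<lambda>c. a * c) f"

definition lin_ext :: "('s letter list \<Rightarrow> ('t, 'k::comm_ring_1) galg)
    \<Rightarrow> ('s, 'k) galg \<Rightarrow> ('t, 'k) galg" where
  "lin_ext h f = (\<Sum>w \<in> Poly_Mapping.keys f. escale (Poly_Mapping.lookup f w) (h w))"

definition emul :: "('s, 'k::comm_ring_1) galg \<Rightarrow> ('s, 'k) galg \<Rightarrow> ('s, 'k) galg" where
  "emul f g = (\<Sum>u \<in> Poly_Mapping.keys f. \<Sum>v \<in> Poly_Mapping.keys g.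
       Poly_Mapping.single (red (u @ v)) (Poly_Mapping.lookup f u * Poly_Mapping.lookup g v))"

definition up_word :: "'s letter list \<Rightarrow> 's letter list" where
  "up_word w = map (\<lambda>(s, i, b). (s, Suc i, b)) w"

definition up :: "('s, 'k::comm_ring_1) galg \<Rightarrow> ('s, 'k) galg" where
  "up f = lin_ext (\<lambda>w. basis (up_word w)) f"

text \<open>A rule is given by R s i = R(s_i); it is extended to inverse letters by
  R(s_i^{-1}) = - s_i^{-1} R(s_i) s_{i+1}^{-1}.\<close>
fun rule_letter :: "('s \<Rightarrow> nat \<Rightarrow> ('s, 'k::comm_ring_1) galg) \<Rightarrow> 's letter \<Rightarrow> ('s, 'k) galg" where
  "rule_letter R (s, i, True) = R s i"
| "rule_letter R (s, i, False) =
     - emul (emul (basis [(s, i, False)]) (R s i)) (basis [(s, Suc i, False)])"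

text \<open>An order permutes the letters of each word; it is applied to EE linearly
  (the permuted word is read as an element of F(SS)).\<close>
definition is_order :: "('s letter list \<Rightarrow> 's letter list) \<Rightarrow> bool" where
  "is_order \<rho> \<longleftrightarrow> (\<forall>w. reduced w \<longrightarrow> mset (\<rho> w) = mset w)"

definition order_apply :: "('s letter list \<Rightarrow> 's letter list) \<Rightarrow> ('s, 'k::comm_ring_1) galg \<Rightarrow> ('s, 'k) galg" where
  "order_apply \<rho> f = lin_ext (\<lambda>w. basis (\<rho> w)) f"

definition qder_word :: "('s \<Rightarrow> nat \<Rightarrow> ('s, 'k::comm_ring_1) galg) \<Rightarrow> ('s letter list \<Rightarrow> 's letter list)
    \<Rightarrow> 's letter list \<Rightarrow> ('s, 'k) galg" where
  "qder_word R \<rho> w = (\<Sum>j < length w.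
      order_apply \<rho> (emul (emul (basis (take j w)) (rule_letter R (w ! j)))
                          (up (basis (drop (Suc j) w)))))"

definition qder :: "('s \<Rightarrow> nat \<Rightarrow> ('s, 'k::comm_ring_1) galg) \<Rightarrow> ('s letter list \<Rightarrow> 's letter list)
    \<Rightarrow> ('s, 'k) galg \<Rightarrow> ('s, 'k) galg" where
  "qder R \<rho> f = lin_ext (qder_word R \<rho>) f"

definition qvar :: "'k::comm_ring_1 poly" where
  "qvar = [:0, 1:]"

definition qpoch :: "nat \<Rightarrow> 'k::comm_ring_1 poly" where
  "qpoch n = (\<Prod>i = 1..n. 1 - qvar ^ i)"

definition invertible_el :: "'v::comm_ring_1 \<Rightarrow> bool" where
  "invertible_el x \<longleftrightarrow> (\<exists>y. x * y = 1)"

definition unit_inv :: "'v::comm_ring_1 \<Rightarrow> 'v" where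
  "unit_inv x = (THE y. x * y = 1)"

text \<open>V is a commutative ring containing K[q], via the injective ring
  homomorphism iota.\<close>
definition embeds_Kq :: "('k::comm_ring_1 poly \<Rightarrow> 'v::comm_ring_1) \<Rightarrow> bool" where
  "embeds_Kq \<iota> \<longleftrightarrow> inj \<iota> \<and> \<iota> 1 = 1 \<and> (\<forall>a b. \<iota> (a + b) = \<iota> a + \<iota> b) \<and> (\<forall>a b. \<iota> (a * b) = \<iota> a * \<iota> b)"

fun eval_letter :: "('s \<Rightarrow> nat \<Rightarrow> 'v::comm_ring_1) \<Rightarrow> 's letter \<Rightarrow> 'v" where
  "eval_letter \<phi> (s, i, True) = \<phi> s i"
| "eval_letter \<phi> (s, i, False) = unit_inv (\<phi> s i)"

definition eval_word :: "('s \<Rightarrow> nat \<Rightarrow> 'v::comm_ring_1) \<Rightarrow> 's letter list \<Rightarrow> 'v" where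
  "eval_word \<phi> w = prod_list (map (eval_letter \<phi>) w)"

definition eval :: "('k::comm_ring_1 poly \<Rightarrow> 'v::comm_ring_1) \<Rightarrow> ('s \<Rightarrow> nat \<Rightarrow> 'v)
    \<Rightarrow> ('s, 'k) galg \<Rightarrow> 'v" where
  "eval \<iota> \<phi> f = (\<Sum>w \<in> Poly_Mapping.keys f. \<iota> (Poly_Mapping.lookup f w) * eval_word \<phi> w)"

definition master_linear :: "('s \<Rightarrow> nat \<Rightarrow> 'v) \<Rightarrow> bool" where
  "master_linear \<phi> \<longleftrightarrow> (\<forall>s i j. \<phi> s i = \<phi> s j)"

text \<open>phi(Gen_q(f;u)) = sum_n phi(D^n f) u^n / (q;q)_n, as a formal power series in u over V.\<close>
definition eval_gen :: "('k::comm_ring_1 poly \<Rightarrow> 'v::comm_ring_1) \<Rightarrow> ('s \<Rightarrow> nat \<Rightarrow> 'v)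
    \<Rightarrow> ('s \<Rightarrow> nat \<Rightarrow> ('s, 'k) galg) \<Rightarrow> ('s letter list \<Rightarrow> 's letter list)
    \<Rightarrow> ('s, 'k) galg \<Rightarrow> 'v fps" where
  "eval_gen \<iota> \<phi> R \<rho> f =
     Abs_fps (\<lambda>n. eval \<iota> \<phi> ((qder R \<rho> ^^ n) f) * unit_inv (\<iota> (qpoch n)))"

end

theory Submission
  imports Defs
begin

unbundle fps_syntax


lemma lookup_escale[simp]: "Poly_Mapping.lookup (escale a f) w = a * Poly_Mapping.lookup f w"
  unfolding escale_def by (simp add: map.rep_eq when_def)

lemma escale_add: "escale a (f + g) = escale a f + escale a g"
  by (rule poly_mapping_eqI) (simp add: lookup_add algebra_simps)
lemma escale_add_left: "escale (a + b) f = escale a f + escale b f"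
  by (rule poly_mapping_eqI) (simp add: lookup_add algebra_simps)
lemma escale_escale: "escale a (escale b f) = escale (a * b) f"
  by (rule poly_mapping_eqI) (simp add: algebra_simps)
lemma escale_1[simp]: "escale 1 f = f"
  by (rule poly_mapping_eqI) simp
lemma escale_0[simp]: "escale 0 f = 0"
  by (rule poly_mapping_eqI) simp
lemma escale_zero[simp]: "escale a 0 = 0"
  by (rule poly_mapping_eqI) simp
lemma escale_uminus: "escale a (- f) = - escale a f"
  by (rule poly_mapping_eqI) simp
lemma escale_neg1: "escale (-1) f = - f"
  by (rule poly_mapping_eqI) simp
lemma escale_sum: "escale a (sum h S) = (\<Sum>x\<in>S. escale a (h x))"
  by (rule poly_mapping_eqI) (simp add: lookup_sum sum_distrib_left)
lemma keys_escale: "Poly_Mapping.keys (escale a f) \<subseteq> Poly_Mapping.keys f"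
  by (auto simp: in_keys_iff)
lemma escale_single: "escale a (Poly_Mapping.single w c) = Poly_Mapping.single w (a * c)"
  by (rule poly_mapping_eqI) (simp add: lookup_single when_def)

lemma lin_ext_superset:
  assumes "finite S" "Poly_Mapping.keys f \<subseteq> S"
  shows "lin_ext h f = (\<Sum>w\<in>S. escale (Poly_Mapping.lookup f w) (h w))"
  unfolding lin_ext_def
  by (rule sum.mono_neutral_left) (use assms in \<open>auto simp: in_keys_iff\<close>)

lemma lin_ext_add: "lin_ext h (f + g) = lin_ext h f + lin_ext h g"
proof -
  let ?S = "Poly_Mapping.keys f \<union> Poly_Mapping.keys g"
  have "lin_ext h (f + g) = (\<Sum>w\<in>?S. escale (Poly_Mapping.lookup (f+g) w) (h w))"
    by (rule lin_ext_superset) (auto dest: keys_add[THEN subsetD])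
  also have "\<dots> = (\<Sum>w\<in>?S. escale (Poly_Mapping.lookup f w) (h w)) + (\<Sum>w\<in>?S. escale (Poly_Mapping.lookup g w) (h w))"
    by (simp add: lookup_add escale_add_left sum.distrib)
  also have "\<dots> = lin_ext h f + lin_ext h g"
    by (subst (1 2) lin_ext_superset[symmetric]) auto
  finally show ?thesis .
qed

lemma lin_ext_escale: "lin_ext h (escale a f) = escale a (lin_ext h f)"
proof -
  have "lin_ext h (escale a f) = (\<Sum>w\<in>Poly_Mapping.keys f. escale (Poly_Mapping.lookup (escale a f) w) (h w))"
    by (rule lin_ext_superset) (auto simp: keys_escale)
  also have "\<dots> = escale a (lin_ext h f)"
    by (simp add: lin_ext_def escale_sum escale_escale)
  finally show ?thesis .
qed

lemma lin_ext_zero[simp]: "lin_ext h 0 = 0"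
  by (simp add: lin_ext_def)

lemma lin_ext_single: "lin_ext h (Poly_Mapping.single w c) = escale c (h w)"
  by (simp add: lin_ext_def)

lemma lin_ext_sum: "lin_ext h (sum F S) = (\<Sum>x\<in>S. lin_ext h (F x))"
  by (induction S rule: infinite_finite_induct) (auto simp: lin_ext_add)

lemma lin_ext_uminus: "lin_ext h (- f) = - lin_ext h f"
  by (metis escale_neg1 lin_ext_escale)

lemma poly_mapping_expand: "f = (\<Sum>w\<in>Poly_Mapping.keys f. Poly_Mapping.single w (Poly_Mapping.lookup f w))"
  by (rule poly_mapping_eqI) (simp add: lookup_sum lookup_single when_def in_keys_iff)



lemma inv_inv[simp]: "inv_letter (inv_letter x) = x"
  by (cases x) auto

lemma red_reduced: "reduced (red w)"
proof (induction w)
  case Nil then show ?case by simp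
next
  case (Cons x xs)
  then show ?case
    by (cases "red xs" rule: reduced.cases) (auto split: list.splits)
qed

lemma reduced_tl: "reduced (x # xs) \<Longrightarrow> reduced xs"
  by (cases xs) auto

lemma red_id: "reduced w \<Longrightarrow> red w = w"
proof (induction w)
  case Nil then show ?case by simp
next
  case (Cons x xs)
  then have "red xs = xs" using reduced_tl by blast
  with Cons.prems show ?case by (cases xs) auto
qed

lemma red_red[simp]: "red (red w) = red w"
  by (simp add: red_id red_reduced)

definition fx :: "'s letter \<Rightarrow> 's letter list \<Rightarrow> 's letter list" where
  "fx x z = (case z of [] \<Rightarrow> [x] | y # ys \<Rightarrow> (if y = inv_letter x then ys else x # y # ys))"

lemma red_Cons_fx: "red (x # w) = fx x (red w)"
  by (simp add: fx_def)

declare red.simps(2)[simp del] red_Cons_fx[simp]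

lemma fx_reduced: "reduced z \<Longrightarrow> reduced (fx x z)"
  by (metis red.simps(2) red_Cons_fx red_id red_reduced)

lemma fx_inv: "reduced z \<Longrightarrow> fx x (fx (inv_letter x) z) = z"
  apply (cases z)
   apply (simp add: fx_def)
  subgoal for a zs
    apply (cases "a = x")
     apply (cases zs; auto simp: fx_def)
    apply (auto simp: fx_def)
    done
  done

lemma red_append_left: "red (u @ w) = red (red u @ w)"
proof (induction u)
  case Nil then show ?case by simp
next
  case (Cons x u)
  have "red ((x # u) @ w) = fx x (red (red u @ w))" using Cons by simp
  also have "\<dots> = red (red (x # u) @ w)"
  proof (cases "red u")
    case Nil then show ?thesis by (simp add: red_Cons_fx fx_def)
  next
    case (Cons y ys)
    show ?thesis
    proof (cases "y = inv_letter x")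
      case True
      have "red (red u @ w) = fx y (red (ys @ w))" using Cons by (simp add: red_Cons_fx)
      then have "fx x (red (red u @ w)) = red (ys @ w)" using True
        by (simp add: fx_inv red_reduced)
      moreover have "red (x # u) = ys" using Cons True by (simp add: red_Cons_fx fx_def)
      ultimately show ?thesis by simp
    next
      case False
      have "red (x # u) = x # red u" using Cons False by (simp add: red_Cons_fx fx_def)
      then show ?thesis by (simp add: red_Cons_fx)
    qed
  qed
  finally show ?case .
qed

lemma red_append_right: "red (u @ w) = red (u @ red w)"
  by (induction u) (simp_all add: red_Cons_fx)

lemma red_append: "red (red u @ red v) = red (u @ v)"
  by (metis red_append_left red_append_right)

lemma red_single[simp]: "red [x] = [x]"
  by (simp add: fx_def)

definition upl :: "'s letter \<Rightarrow> 's letter" where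
  "upl x = (case x of (s, i, b) \<Rightarrow> (s, Suc i, b))"

lemma up_word_map: "up_word w = map upl w"
  unfolding up_word_def upl_def by simp

lemma upl_inv: "inv_letter (upl x) = upl (inv_letter x)"
  by (cases x) (simp add: upl_def)

lemma upl_inj: "upl x = upl y \<longleftrightarrow> x = y"
  by (cases x; cases y) (auto simp: upl_def)

lemma red_up: "red (map upl w) = map upl (red w)"
proof (induction w)
  case Nil then show ?case by simp
next
  case (Cons x w)
  then show ?case
    by (cases "red w") (auto simp: upl_inv upl_inj fx_def)
qed

lemma carrier_add: assumes "f \<in> galg_carrier" "g \<in> galg_carrier" shows "f + g \<in> galg_carrier"
  using assms keys_add[of f g] unfolding galg_carrier_def by auto

lemma carrier_zero[simp]: "0 \<in> galg_carrier"
  unfolding galg_carrier_def by simp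

lemma carrier_sum: "(\<And>x. x \<in> S \<Longrightarrow> F x \<in> galg_carrier) \<Longrightarrow> sum F S \<in> galg_carrier"
proof (induction S rule: infinite_finite_induct)
  case (insert x F)
  then show ?case by (simp add: carrier_add)
qed simp_all

lemma carrier_escale: "f \<in> galg_carrier \<Longrightarrow> escale a f \<in> galg_carrier"
  unfolding galg_carrier_def using keys_escale[of a f] by auto

lemma carrier_uminus: "f \<in> galg_carrier \<Longrightarrow> - f \<in> galg_carrier"
  by (metis carrier_escale escale_neg1)

lemma carrier_single: "Poly_Mapping.single (red w) c \<in> galg_carrier"
  unfolding galg_carrier_def by (simp add: red_reduced)

lemma carrier_basis: "basis w \<in> galg_carrier"
  unfolding basis_def by (rule carrier_single)

lemma carrier_emul: "emul f g \<in> galg_carrier"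
  unfolding emul_def by (intro carrier_sum carrier_single)

lemma carrier_lin_ext: "(\<And>w. h w \<in> galg_carrier) \<Longrightarrow> lin_ext h f \<in> galg_carrier"
  unfolding lin_ext_def by (intro carrier_sum carrier_escale) blast

lemma carrier_up: "up f \<in> galg_carrier"
  unfolding up_def by (intro carrier_lin_ext carrier_basis)

lemma carrier_order: "order_apply \<rho> f \<in> galg_carrier"
  unfolding order_apply_def by (intro carrier_lin_ext carrier_basis)

lemma carrier_rule: assumes "\<And>s i. R s i \<in> galg_carrier" shows "rule_letter R x \<in> galg_carrier"
proof -
  obtain s i b where x: "x = (s, i, b)" by (cases x) auto
  show ?thesis
  proof (cases b)
    case True then show ?thesis using x assms by simp
  next
    case False then show ?thesis using x by (simp add: carrier_uminus carrier_emul)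
  qed
qed

lemma basis_Nil: "basis [] = Poly_Mapping.single [] 1"
  by (simp add: basis_def)

lemma basis_reduced: "reduced w \<Longrightarrow> basis w = Poly_Mapping.single w 1"
  by (simp add: basis_def red_id)

lemma emul_basis: "emul (basis u) (basis v) = basis (u @ v)"
  by (simp add: emul_def basis_def red_append)

lemma up_basis: "up (basis w) = basis (map upl w)"
  by (simp add: up_def basis_def lin_ext_single up_word_map red_up)

lemma order_basis: "reduced u \<Longrightarrow> order_apply \<rho> (basis u) = basis (\<rho> u)"
  by (simp add: order_apply_def basis_reduced lin_ext_single)

lemma qder_basis: "qder R \<rho> (basis w) = qder_word R \<rho> (red w)"
  by (simp add: qder_def basis_def lin_ext_single)

lemma carrier_expand: "f \<in> galg_carrier \<Longrightarrow>
   f = (\<Sum>u\<in>Poly_Mapping.keys f. escale (Poly_Mapping.lookup f u) (basis u))"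
  apply (subst poly_mapping_expand)
  apply (rule sum.cong[OF refl])
  apply (simp add: galg_carrier_def basis_reduced escale_single)
  done

lemma qder_add: "qder R \<rho> (f + g) = qder R \<rho> f + qder R \<rho> g"
  by (simp add: qder_def lin_ext_add)
lemma qder_escale: "qder R \<rho> (escale a f) = escale a (qder R \<rho> f)"
  by (simp add: qder_def lin_ext_escale)
lemma qder_zero: "qder R \<rho> 0 = 0"
  by (simp add: qder_def)

lemma qderpow_add: "(qder R \<rho> ^^ n) (f + g) = (qder R \<rho> ^^ n) f + (qder R \<rho> ^^ n) g"
  by (induction n) (auto simp: qder_add)
lemma qderpow_escale: "(qder R \<rho> ^^ n) (escale a f) = escale a ((qder R \<rho> ^^ n) f)"
  by (induction n) (auto simp: qder_escale)
lemma qderpow_zero: "(qder R \<rho> ^^ n) 0 = 0"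
  by (induction n) (auto simp: qder_zero)



definition dq :: "'v::comm_ring_1 \<Rightarrow> 'v fps \<Rightarrow> 'v fps" where
  "dq Q F = Abs_fps (\<lambda>m. F $ Suc m * (1 - Q ^ Suc m))"
definition sc :: "'v::comm_ring_1 \<Rightarrow> 'v fps \<Rightarrow> 'v fps" where
  "sc Q F = Abs_fps (\<lambda>m. Q ^ m * F $ m)"
definition eqN :: "nat \<Rightarrow> 'v::comm_ring_1 fps \<Rightarrow> 'v fps \<Rightarrow> bool" where
  "eqN N F H \<longleftrightarrow> (\<forall>m\<le>N. F $ m = H $ m)"

lemma dq_nth[simp]: "dq Q F $ m = F $ Suc m * (1 - Q ^ Suc m)"
  by (simp add: dq_def)
lemma sc_nth[simp]: "sc Q F $ m = Q ^ m * F $ m"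
  by (simp add: sc_def)

lemma sc_mult: "sc Q (F * H) = sc Q F * sc Q H"
proof (rule fps_ext)
  fix n
  have "sc Q (F * H) $ n = (\<Sum>i\<le>n. Q ^ n * (F $ i * H $ (n - i)))"
    by (simp add: fps_mult_nth sum_distrib_left atLeast0AtMost)
  also have "\<dots> = (\<Sum>i\<le>n. Q ^ i * F $ i * (Q ^ (n - i) * H $ (n - i)))"
    by (rule sum.cong[OF refl]) (simp add: power_add[symmetric] algebra_simps)
  also have "\<dots> = (sc Q F * sc Q H) $ n"
    by (simp add: fps_mult_nth atLeast0AtMost)
  finally show "sc Q (F * H) $ n = (sc Q F * sc Q H) $ n" .
qed

lemma sc_add: "sc Q (F + H) = sc Q F + sc Q H"
  by (rule fps_ext) (simp add: algebra_simps)
lemma sc_uminus: "sc Q (- F) = - sc Q F"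
  by (rule fps_ext) simp
lemma sc_one[simp]: "sc Q 1 = 1"
  by (rule fps_ext) simp
lemma sc_zero[simp]: "sc Q 0 = 0"
  by (rule fps_ext) simp
lemma sc_const: "sc Q (fps_const c * F) = fps_const c * sc Q F"
  by (rule fps_ext) (simp add: algebra_simps)

lemma dq_add: "dq Q (F + H) = dq Q F + dq Q H"
  by (rule fps_ext) (simp add: algebra_simps)
lemma dq_uminus: "dq Q (- F) = - dq Q F"
  by (rule fps_ext) simp
lemma dq_one[simp]: "dq Q 1 = 0"
  by (rule fps_ext) simp
lemma dq_zero[simp]: "dq Q 0 = 0"
  by (rule fps_ext) simp
lemma dq_const: "dq Q (fps_const c * F) = fps_const c * dq Q F"
  by (rule fps_ext) (simp add: algebra_simps)
lemma dq_sc: "dq Q (sc Q F) = fps_const Q * sc Q (dq Q F)"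
  by (rule fps_ext) (simp add: algebra_simps)

lemma dq_mult: "dq Q (F * H) = dq Q F * sc Q H + F * dq Q H"
proof (rule fps_ext)
  fix m
  define a where "a i = F $ i * H $ (Suc m - i)" for i
  have split: "1 - Q ^ Suc m = (1 - Q ^ (Suc m - i)) + Q ^ (Suc m - i) * (1 - Q ^ i)" if "i \<le> Suc m" for i
  proof -
    have "Q ^ (Suc m - i) * Q ^ i = Q ^ Suc m" using that by (simp add: power_add[symmetric])
    then show ?thesis by (simp add: algebra_simps)
  qed
  have "dq Q (F * H) $ m = (\<Sum>i\<le>Suc m. a i) * (1 - Q ^ Suc m)"
    by (simp add: fps_mult_nth atLeast0AtMost a_def)
  also have "\<dots> = (\<Sum>i\<le>Suc m. a i * (1 - Q ^ Suc m))"
    by (rule sum_distrib_right)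
  also have "\<dots> = (\<Sum>i\<le>Suc m. a i * (1 - Q ^ (Suc m - i)) + a i * Q ^ (Suc m - i) * (1 - Q ^ i))"
  proof (rule sum.cong[OF refl])
    fix i assume "i \<in> {..Suc m}"
    then have "i \<le> Suc m" by simp
    show "a i * (1 - Q ^ Suc m) = a i * (1 - Q ^ (Suc m - i)) + a i * Q ^ (Suc m - i) * (1 - Q ^ i)"
      by (subst split[OF \<open>i \<le> Suc m\<close>]) (simp only: distrib_left mult.assoc)
  qed
  also have "\<dots> = (\<Sum>i\<le>Suc m. a i * (1 - Q ^ (Suc m - i))) + (\<Sum>i\<le>Suc m. a i * Q ^ (Suc m - i) * (1 - Q ^ i))"
    by (rule sum.distrib)
  also have "(\<Sum>i\<le>Suc m. a i * (1 - Q ^ (Suc m - i))) = (\<Sum>i\<le>m. a i * (1 - Q ^ (Suc m - i)))"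
    by (simp add: sum.atMost_Suc)
  also have "\<dots> = (F * dq Q H) $ m"
    by (simp add: fps_mult_nth atLeast0AtMost a_def Suc_diff_le mult.assoc)
  also have "(\<Sum>i\<le>Suc m. a i * Q ^ (Suc m - i) * (1 - Q ^ i)) = (\<Sum>i\<le>m. a (Suc i) * Q ^ (m - i) * (1 - Q ^ Suc i))"
    by (subst sum.atMost_Suc_shift) simp
  also have "\<dots> = (dq Q F * sc Q H) $ m"
    by (simp add: fps_mult_nth atLeast0AtMost a_def algebra_simps)
  finally show "dq Q (F * H) $ m = (dq Q F * sc Q H + F * dq Q H) $ m" by (simp add: add.commute)
qed

lemma eqN_refl[simp]: "eqN N F F" by (simp add: eqN_def)
lemma eqN_sym: "eqN N F H \<Longrightarrow> eqN N H F" by (simp add: eqN_def)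
lemma eqN_trans[trans]: "eqN N F H \<Longrightarrow> eqN N H K \<Longrightarrow> eqN N F K" by (simp add: eqN_def)
lemma eqN_eq_trans[trans]: "F = H \<Longrightarrow> eqN N H K \<Longrightarrow> eqN N F K" by simp
lemma eqN_trans_eq[trans]: "eqN N F H \<Longrightarrow> H = K \<Longrightarrow> eqN N F K" by simp
lemma eqN_add: "eqN N F H \<Longrightarrow> eqN N F' H' \<Longrightarrow> eqN N (F + F') (H + H')" by (simp add: eqN_def)
lemma eqN_uminus: "eqN N F H \<Longrightarrow> eqN N (- F) (- H)" by (simp add: eqN_def)
lemma eqN_mult: "eqN N F H \<Longrightarrow> eqN N F' H' \<Longrightarrow> eqN N (F * F') (H * H')"
  by (auto simp add: eqN_def fps_mult_nth intro!: sum.cong)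
lemma eqN_sc: "eqN N F H \<Longrightarrow> eqN N (sc Q F) (sc Q H)" by (simp add: eqN_def)
lemma eqN_sum: "(\<And>x. x \<in> S \<Longrightarrow> eqN N (F x) (H x)) \<Longrightarrow> eqN N (sum F S) (sum H S)"
  by (induction S rule: infinite_finite_induct) (auto intro: eqN_add)
lemma eqN_prod_list: "(\<And>x. x \<in> set xs \<Longrightarrow> eqN N (F x) (H x)) \<Longrightarrow>
   eqN N (prod_list (map F xs)) (prod_list (map H xs))"
  by (induction xs) (auto intro: eqN_mult)
lemma eqN_dq: "eqN (Suc N) F H \<Longrightarrow> eqN N (dq Q F) (dq Q H)" by (simp add: eqN_def)
lemma eqN_Suc_D: "eqN (Suc N) F H \<Longrightarrow> eqN N F H" by (simp add: eqN_def)
lemma eqN_0: "eqN 0 F H \<longleftrightarrow> F $ 0 = H $ 0" by (simp add: eqN_def)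

lemma eqN_SucI:
  assumes inv: "\<And>m. \<exists>y. (1 - Q ^ Suc m) * y = 1"
    and h0: "F $ 0 = H $ 0" and d: "eqN N (dq Q F) (dq Q H)"
  shows "eqN (Suc N) F H"
  unfolding eqN_def
proof (intro allI impI)
  fix m assume "m \<le> Suc N"
  show "F $ m = H $ m"
  proof (cases m)
    case 0 then show ?thesis using h0 by simp
  next
    case (Suc k)
    then have "k \<le> N" using \<open>m \<le> Suc N\<close> by simp
    then have "F $ Suc k * (1 - Q ^ Suc k) = H $ Suc k * (1 - Q ^ Suc k)"
      using d by (simp add: eqN_def)
    moreover obtain y where "(1 - Q ^ Suc k) * y = 1" using inv by blast
    ultimately have "F $ Suc k * (1 - Q ^ Suc k) * y = H $ Suc k * (1 - Q ^ Suc k) * y" by simp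
    then show ?thesis using \<open>(1 - Q ^ Suc k) * y = 1\<close> Suc by (simp add: mult.assoc)
  qed
qed

lemma eqN_all: "(\<And>N. eqN N F H) \<Longrightarrow> F = H"
  by (rule fps_ext) (auto simp: eqN_def)

lemma prod_list_nth0: "prod_list (map F xs) $ 0 = prod_list (map (\<lambda>x. F x $ 0) xs)"
  by (induction xs) auto



lemma unit_inv_eq: assumes "x * y = (1::'v::comm_ring_1)" shows "unit_inv x = y"
  unfolding unit_inv_def
proof (rule the_equality)
  show "x * y = 1" by fact
  fix z assume "x * z = 1"
  then have "z = z * (x * y)" using assms by simp
  also have "\<dots> = y * (x * z)" by (simp add: algebra_simps)
  finally show "z = y" using \<open>x * z = 1\<close> by simp
qed

lemma qpoch_0[simp]: "qpoch 0 = 1"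
  by (simp add: qpoch_def)

lemma qpoch_Suc: "qpoch (Suc m) = qpoch m * (1 - qvar ^ Suc m)"
proof -
  have "{1..Suc m} = insert (Suc m) {1..m}" by auto
  then show ?thesis by (simp add: qpoch_def mult.commute)
qed

lemma eval_word_Nil[simp]: "eval_word \<phi> [] = 1"
  by (simp add: eval_word_def)
lemma eval_word_Cons: "eval_word \<phi> (x # w) = eval_letter \<phi> x * eval_word \<phi> w"
  by (simp add: eval_word_def)
lemma eval_word_append: "eval_word \<phi> (u @ w) = eval_word \<phi> u * eval_word \<phi> w"
  by (simp add: eval_word_def)

locale qg =
  fixes R :: "'s \<Rightarrow> nat \<Rightarrow> ('s, 'k::comm_ring_1) galg"
    and \<rho> :: "'s letter list \<Rightarrow> 's letter list"
    and \<iota> :: "'k poly \<Rightarrow> 'v::comm_ring_1"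
    and \<phi> :: "'s \<Rightarrow> nat \<Rightarrow> 'v"
  assumes R_in: "\<And>s i. R s i \<in> galg_carrier"
    and order: "is_order \<rho>"
    and R_up: "\<And>s i. R s (Suc i) = escale qvar (up (R s i))"
    and V: "embeds_Kq \<iota>"
    and units_qpoch: "\<And>n. invertible_el (\<iota> (qpoch n))"
    and phi_units: "\<And>s i. invertible_el (\<phi> s i)"
    and ml: "master_linear \<phi>"
begin

abbreviation "Q \<equiv> \<iota> qvar"
abbreviation "ev \<equiv> eval \<iota> \<phi>"
abbreviation "D \<equiv> qder R \<rho>"
abbreviation "G \<equiv> eval_gen \<iota> \<phi> R \<rho>"

lemma i_add: "\<iota> (a + b) = \<iota> a + \<iota> b" using V by (simp add: embeds_Kq_def)
lemma i_mult: "\<iota> (a * b) = \<iota> a * \<iota> b" using V by (simp add: embeds_Kq_def)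
lemma i_1: "\<iota> 1 = 1" using V by (simp add: embeds_Kq_def)
lemma i_0: "\<iota> 0 = 0"
proof -
  have "\<iota> (0 + 0) = \<iota> 0 + \<iota> 0" by (rule i_add)
  then show ?thesis by simp
qed
lemma i_uminus: "\<iota> (- a) = - \<iota> a"
proof -
  have "\<iota> (a + - a) = \<iota> a + \<iota> (- a)" by (rule i_add)
  then have "\<iota> a + \<iota> (- a) = 0" by (simp add: i_0)
  then show ?thesis by (simp add: add_eq_0_iff2)
qed
lemma i_diff: "\<iota> (a - b) = \<iota> a - \<iota> b"
  using i_add[of a "- b"] by (simp add: i_uminus)
lemma i_power: "\<iota> (a ^ n) = \<iota> a ^ n"
  by (induction n) (simp_all add: i_1 i_mult)

lemma phi_inv: "unit_inv (\<phi> s i) * \<phi> s i = 1"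
proof -
  obtain y where "\<phi> s i * y = 1" using phi_units[of s i] by (auto simp: invertible_el_def)
  then show ?thesis by (simp add: unit_inv_eq mult.commute)
qed

lemma eval_letter_inv: "eval_letter \<phi> x * eval_letter \<phi> (inv_letter x) = 1"
proof -
  obtain s i b where x: "x = (s, i, b)" by (cases x) auto
  have "\<phi> s i * unit_inv (\<phi> s i) = 1" using phi_inv[of s i] by (simp add: mult.commute)
  with x phi_inv[of s i] show ?thesis by (cases b) simp_all
qed

lemma eval_word_fx: "eval_word \<phi> (fx x z) = eval_letter \<phi> x * eval_word \<phi> z"
proof (cases z)
  case (Cons y ys)
  show ?thesis
  proof (cases "y = inv_letter x")
    case True
    then have "eval_letter \<phi> x * eval_word \<phi> z = (eval_letter \<phi> x * eval_letter \<phi> (inv_letter x)) * eval_word \<phi> ys"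
      using Cons by (simp add: eval_word_Cons mult.assoc)
    then show ?thesis using True Cons by (simp add: fx_def eval_letter_inv)
  qed (use Cons in \<open>simp_all add: fx_def eval_word_Cons\<close>)
qed (simp add: fx_def eval_word_Cons)

lemma eval_word_red: "eval_word \<phi> (red w) = eval_word \<phi> w"
  by (induction w) (simp_all add: eval_word_fx eval_word_Cons)

lemma eval_letter_upl: "eval_letter \<phi> (upl x) = eval_letter \<phi> x"
proof -
  have "\<phi> s (Suc i) = \<phi> s i" for s i using ml by (simp add: master_linear_def)
  moreover obtain s i b where x: "x = (s, i, b)" by (cases x) auto
  ultimately show ?thesis by (cases b) (simp_all add: upl_def)
qed

lemma ev_superset:
  assumes "finite S" "Poly_Mapping.keys f \<subseteq> S"
  shows "ev f = (\<Sum>w\<in>S. \<iota> (Poly_Mapping.lookup f w) * eval_word \<phi> w)"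
  unfolding eval_def
  by (rule sum.mono_neutral_left) (use assms in \<open>auto simp: in_keys_iff i_0\<close>)

lemma ev_add: "ev (f + g) = ev f + ev g"
proof -
  let ?S = "Poly_Mapping.keys f \<union> Poly_Mapping.keys g"
  have "ev (f + g) = (\<Sum>w\<in>?S. \<iota> (Poly_Mapping.lookup (f+g) w) * eval_word \<phi> w)"
    by (rule ev_superset) (auto dest: keys_add[THEN subsetD])
  also have "\<dots> = (\<Sum>w\<in>?S. \<iota> (Poly_Mapping.lookup f w) * eval_word \<phi> w) + (\<Sum>w\<in>?S. \<iota> (Poly_Mapping.lookup g w) * eval_word \<phi> w)"
    by (simp add: lookup_add i_add sum.distrib distrib_right)
  also have "\<dots> = ev f + ev g"
    by (subst (1 2) ev_superset[symmetric]) auto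
  finally show ?thesis .
qed

lemma ev_escale: "ev (escale a f) = \<iota> a * ev f"
proof -
  have "ev (escale a f) = (\<Sum>w\<in>Poly_Mapping.keys f. \<iota> (Poly_Mapping.lookup (escale a f) w) * eval_word \<phi> w)"
    by (rule ev_superset) (auto simp: keys_escale)
  also have "\<dots> = \<iota> a * ev f"
    by (simp add: eval_def sum_distrib_left i_mult mult.assoc)
  finally show ?thesis .
qed

lemma ev_single: "ev (Poly_Mapping.single w c) = \<iota> c * eval_word \<phi> w"
  by (simp add: eval_def i_0)

lemma ev_basis: "ev (basis w) = eval_word \<phi> w"
  by (simp add: basis_def ev_single i_1 eval_word_red)

lemma G_nth: "G x $ n = ev ((D ^^ n) x) * unit_inv (\<iota> (qpoch n))"
  by (simp add: eval_gen_def)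

lemma G_nth0: "G x $ 0 = ev x"
  using unit_inv_eq[of "1::'v" 1] by (simp add: G_nth i_1)

lemma G_add: "G (f + g) = G f + G g"
  by (rule fps_ext) (simp add: G_nth qderpow_add ev_add algebra_simps)

lemma G_escale: "G (escale a f) = fps_const (\<iota> a) * G f"
  by (rule fps_ext) (simp add: G_nth qderpow_escale ev_escale algebra_simps)

lemma G_zero: "G 0 = 0"
  using G_escale[of 0 0] by (simp add: i_0)

lemma G_uminus: "G (- f) = - G f"
  using G_escale[of "-1" f] by (simp add: escale_neg1 i_uminus i_1 fps_const_neg[symmetric] del: fps_const_neg)

lemma G_sum: "G (sum F S) = (\<Sum>x\<in>S. G (F x))"
  by (induction S rule: infinite_finite_induct) (simp_all add: G_zero G_add)

lemma i_qpoch_Suc: "\<iota> (qpoch (Suc m)) = \<iota> (qpoch m) * (1 - Q ^ Suc m)"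
  by (simp only: qpoch_Suc i_mult i_diff i_1 i_power)

lemma inv_factor: "\<exists>y. (1 - Q ^ Suc m) * y = 1"
proof -
  obtain y where "\<iota> (qpoch (Suc m)) * y = 1" using units_qpoch[of "Suc m"] by (auto simp: invertible_el_def)
  then have "(1 - Q ^ Suc m) * (\<iota> (qpoch m) * y) = 1"
    unfolding i_qpoch_Suc by (simp only: mult_ac)
  then show ?thesis by blast
qed

lemma inv_qpoch_Suc: "unit_inv (\<iota> (qpoch (Suc m))) * (1 - Q ^ Suc m) = unit_inv (\<iota> (qpoch m))"
proof -
  obtain y where y: "\<iota> (qpoch (Suc m)) * y = 1" using units_qpoch[of "Suc m"] by (auto simp: invertible_el_def)
  then have "\<iota> (qpoch m) * ((1 - Q ^ Suc m) * y) = 1"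
    unfolding i_qpoch_Suc by (simp only: mult.assoc)
  then have "unit_inv (\<iota> (qpoch m)) = (1 - Q ^ Suc m) * y" by (rule unit_inv_eq)
  moreover have "unit_inv (\<iota> (qpoch (Suc m))) = y" using y by (rule unit_inv_eq)
  ultimately show ?thesis by (simp add: mult.commute)
qed

lemma G_dq: "dq Q (G x) = G (D x)"
proof (rule fps_ext)
  fix m
  have "dq Q (G x) $ m = ev ((D ^^ m) (D x)) * (unit_inv (\<iota> (qpoch (Suc m))) * (1 - Q ^ Suc m))"
    by (simp add: G_nth funpow_Suc_right mult.assoc del: funpow.simps)
  also have "\<dots> = G (D x) $ m" by (simp only: inv_qpoch_Suc G_nth)
  finally show "dq Q (G x) $ m = G (D x) $ m" .
qed

end


lemma eqN_cmult: "eqN N F H \<Longrightarrow> eqN N (fps_const c * F) (fps_const c * H)"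
  by (rule eqN_mult) auto

lemma sc_sum: "sc Q (sum F S) = (\<Sum>x\<in>S. sc Q (F x))"
  by (induction S rule: infinite_finite_induct) (simp_all add: sc_add)

lemma sc_prod_list: "sc Q (prod_list (map F xs)) = prod_list (map (\<lambda>x. sc Q (F x)) xs)"
  by (induction xs) (simp_all add: sc_mult)

lemma single_as_escale: "Poly_Mapping.single (red w) c = escale c (basis w)"
  by (simp add: basis_def escale_single)

context qg
begin

definition L where "L x = G (basis [x])"
definition Rl where "Rl x = G (rule_letter R x)"
definition PL where "PL w = prod_list (map L w)"
definition Phi where "Phi w = (\<Sum>j<length w. PL (take j w) * Rl (w ! j) * sc Q (PL (drop (Suc j) w)))"
definition Inv where "Inv N \<longleftrightarrow> (\<forall>w. eqN N (G (basis w)) (PL w)) \<and> (\<forall>x. eqN N (L (upl x)) (sc Q (L x)))"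

lemma PL_Nil[simp]: "PL [] = 1" by (simp add: PL_def)
lemma PL_Cons: "PL (x # w) = L x * PL w" by (simp add: PL_def)
lemma PL_append: "PL (u @ w) = PL u * PL w" by (simp add: PL_def)

lemma G_lin_ext: "G (lin_ext h f) = (\<Sum>u\<in>Poly_Mapping.keys f. fps_const (\<iota> (Poly_Mapping.lookup f u)) * G (h u))"
  by (simp add: lin_ext_def G_sum G_escale)

lemma G_expand: "f \<in> galg_carrier \<Longrightarrow>
   G f = (\<Sum>u\<in>Poly_Mapping.keys f. fps_const (\<iota> (Poly_Mapping.lookup f u)) * G (basis u))"
  by (subst carrier_expand) (simp_all add: G_sum G_escale)

lemma Inv_basis: "Inv N \<Longrightarrow> eqN N (G (basis w)) (PL w)"
  by (simp add: Inv_def)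

lemma Inv_upl: assumes "Inv N" shows "eqN N (L (upl x)) (sc Q (L x))"
proof -
  have "\<forall>x. eqN N (L (upl x)) (sc Q (L x))" using assms unfolding Inv_def by (elim conjE)
  then show ?thesis by (rule spec)
qed

lemma A_basis: assumes "Inv N" shows "eqN N (G (basis (u @ v))) (G (basis u) * G (basis v))"
proof -
  have "eqN N (G (basis (u @ v))) (PL (u @ v))" using assms by (rule Inv_basis)
  also have "PL (u @ v) = PL u * PL v" by (rule PL_append)
  also have "eqN N \<dots> (G (basis u) * G (basis v))"
    using assms by (intro eqN_mult eqN_sym[OF Inv_basis])
  finally show ?thesis .
qed

lemma A: assumes "Inv N" "f \<in> galg_carrier" "g \<in> galg_carrier"
  shows "eqN N (G (emul f g)) (G f * G g)"
proof -
  let ?c = "\<lambda>f u. fps_const (\<iota> (Poly_Mapping.lookup f u))"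
  have "G (emul f g) = (\<Sum>u\<in>Poly_Mapping.keys f. \<Sum>v\<in>Poly_Mapping.keys g.
      ?c f u * ?c g v * G (basis (u @ v)))"
    by (simp add: emul_def G_sum single_as_escale G_escale i_mult fps_const_mult[symmetric] del: fps_const_mult)
  also have "eqN N \<dots> (\<Sum>u\<in>Poly_Mapping.keys f. \<Sum>v\<in>Poly_Mapping.keys g.
      ?c f u * ?c g v * (G (basis u) * G (basis v)))"
    using assms(1) by (intro eqN_sum eqN_mult A_basis) auto
  also have "\<dots> = (\<Sum>u\<in>Poly_Mapping.keys f. ?c f u * G (basis u)) * (\<Sum>v\<in>Poly_Mapping.keys g. ?c g v * G (basis v))"
    by (simp add: sum_product mult_ac del: fps_const_mult)
  also have "\<dots> = G f * G g"
    using assms(2,3) by (simp add: G_expand[symmetric])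
  finally show ?thesis .
qed

lemma PL_up: assumes "Inv N" shows "eqN N (PL (map upl u)) (sc Q (PL u))"
proof -
  have "PL (map upl u) = prod_list (map (\<lambda>x. L (upl x)) u)" by (simp add: PL_def o_def)
  also have "eqN N \<dots> (prod_list (map (\<lambda>x. sc Q (L x)) u))"
    using assms by (intro eqN_prod_list Inv_upl)
  also have "\<dots> = sc Q (PL u)" by (simp add: PL_def sc_prod_list)
  finally show ?thesis .
qed

lemma B_basis: assumes "Inv N" shows "eqN N (G (basis (map upl u))) (sc Q (G (basis u)))"
proof -
  have "eqN N (G (basis (map upl u))) (PL (map upl u))" using assms by (rule Inv_basis)
  also have "eqN N \<dots> (sc Q (PL u))" using assms by (rule PL_up)
  also have "eqN N \<dots> (sc Q (G (basis u)))" using assms by (intro eqN_sc eqN_sym[OF Inv_basis])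
  finally show ?thesis .
qed

lemma B: assumes "Inv N" "f \<in> galg_carrier"
  shows "eqN N (G (up f)) (sc Q (G f))"
proof -
  let ?c = "\<lambda>f u. fps_const (\<iota> (Poly_Mapping.lookup f u))"
  have "G (up f) = (\<Sum>u\<in>Poly_Mapping.keys f. ?c f u * G (basis (map upl u)))"
    by (simp add: up_def G_lin_ext up_word_map)
  also have "eqN N \<dots> (\<Sum>u\<in>Poly_Mapping.keys f. ?c f u * sc Q (G (basis u)))"
    using assms(1) by (intro eqN_sum eqN_cmult B_basis)
  also have "\<dots> = sc Q (G f)"
    using assms(2) by (simp add: G_expand[of f] sc_sum sc_const)
  finally show ?thesis .
qed

lemma PL_perm: "mset u = mset v \<Longrightarrow> PL u = PL v"
  unfolding PL_def by (metis mset_map prod_mset_prod_list)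

lemma C: assumes "Inv N" "f \<in> galg_carrier"
  shows "eqN N (G (order_apply \<rho> f)) (G f)"
proof -
  let ?c = "\<lambda>f u. fps_const (\<iota> (Poly_Mapping.lookup f u))"
  have "G (order_apply \<rho> f) = (\<Sum>u\<in>Poly_Mapping.keys f. ?c f u * G (basis (\<rho> u)))"
    by (simp add: order_apply_def G_lin_ext)
  also have "eqN N \<dots> (\<Sum>u\<in>Poly_Mapping.keys f. ?c f u * G (basis u))"
  proof (intro eqN_sum eqN_cmult)
    fix u assume u: "u \<in> Poly_Mapping.keys f"
    then have "reduced u" using assms(2) by (auto simp: galg_carrier_def)
    then have "mset (\<rho> u) = mset u" using order by (simp add: is_order_def)
    have "eqN N (G (basis (\<rho> u))) (PL (\<rho> u))" using assms(1) by (rule Inv_basis)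
    also have "PL (\<rho> u) = PL u" by (rule PL_perm) fact
    also have "eqN N \<dots> (G (basis u))" using assms(1) by (intro eqN_sym[OF Inv_basis])
    finally show "eqN N (G (basis (\<rho> u))) (G (basis u))" .
  qed
  also have "\<dots> = G f" using assms(2) by (simp add: G_expand[of f])
  finally show ?thesis .
qed

end


lemma eqN_diff: "eqN N F H \<Longrightarrow> eqN N F' H' \<Longrightarrow> eqN N (F - F') (H - H')"
  by (simp add: eqN_def)

context qg
begin

lemma Rl_True: "Rl (s, i, True) = G (R s i)"
  by (simp add: Rl_def)

lemma upl_simp[simp]: "upl (s, i, b) = (s, Suc i, b)"
  by (simp add: upl_def)

lemma Rl_False: assumes "Inv N"
  shows "eqN N (Rl (s, i, False)) (- (L (s, i, False) * G (R s i) * sc Q (L (s, i, False))))"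
proof -
  let ?x = "(s, i, False)"
  have "Rl ?x = - G (emul (emul (basis [?x]) (R s i)) (basis [(s, Suc i, False)]))"
    by (simp add: Rl_def G_uminus)
  also have "eqN N \<dots> (- (G (emul (basis [?x]) (R s i)) * G (basis [(s, Suc i, False)])))"
    using assms by (intro eqN_uminus A carrier_emul carrier_basis)
  also have "eqN N \<dots> (- ((L ?x * G (R s i)) * sc Q (L ?x)))"
  proof (intro eqN_uminus eqN_mult)
    show "eqN N (G (emul (basis [?x]) (R s i))) (L ?x * G (R s i))"
      unfolding L_def using assms by (intro A carrier_basis R_in)
    have "eqN N (L (upl ?x)) (sc Q (L ?x))" using assms by (rule Inv_upl)
    then show "eqN N (G (basis [(s, Suc i, False)])) (sc Q (L ?x))" by (simp add: L_def)
  qed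
  finally show ?thesis .
qed

lemma R_G_up: assumes "Inv N" shows "eqN N (G (R s (Suc i))) (fps_const Q * sc Q (G (R s i)))"
proof -
  have "G (R s (Suc i)) = fps_const Q * G (up (R s i))" by (simp add: R_up G_escale)
  also have "eqN N \<dots> (fps_const Q * sc Q (G (R s i)))"
    using assms by (intro eqN_cmult B R_in)
  finally show ?thesis .
qed

lemma Rl_upl: assumes "Inv N" shows "eqN N (Rl (upl x)) (fps_const Q * sc Q (Rl x))"
proof -
  obtain s i b where x: "x = (s, i, b)" by (cases x) auto
  show ?thesis
  proof (cases b)
    case True
    then show ?thesis using x R_G_up[OF assms] by (simp add: Rl_True)
  next
    case False
    let ?x = "(s, i, False)"
    let ?r = "G (R s i)"
    have "eqN N (Rl (upl ?x)) (- (L (upl ?x) * G (R s (Suc i)) * sc Q (L (upl ?x))))"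
      using Rl_False[OF assms, of s "Suc i"] by simp
    also have "eqN N \<dots> (- (sc Q (L ?x) * (fps_const Q * sc Q ?r) * sc Q (sc Q (L ?x))))"
      using assms by (intro eqN_uminus eqN_mult eqN_sc Inv_upl R_G_up)
    also have "\<dots> = fps_const Q * sc Q (- (L ?x * ?r * sc Q (L ?x)))"
      by (simp add: sc_mult sc_uminus mult_ac)
    also have "eqN N \<dots> (fps_const Q * sc Q (Rl ?x))"
      using assms by (intro eqN_cmult eqN_sc eqN_sym[OF Rl_False])
    finally show ?thesis using x False by simp
  qed
qed

lemma term_G: assumes "Inv N"
  shows "eqN N (G (order_apply \<rho> (emul (emul (basis a) (rule_letter R x)) (up (basis b)))))
                (PL a * Rl x * sc Q (PL b))"
proof -
  have "eqN N (G (order_apply \<rho> (emul (emul (basis a) (rule_letter R x)) (up (basis b)))))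
     (G (emul (emul (basis a) (rule_letter R x)) (up (basis b))))"
    using assms by (intro C carrier_emul)
  also have "eqN N \<dots> (G (emul (basis a) (rule_letter R x)) * G (up (basis b)))"
    using assms by (intro A carrier_emul carrier_up)
  also have "eqN N \<dots> ((G (basis a) * Rl x) * sc Q (G (basis b)))"
    unfolding Rl_def using assms
    by (intro eqN_mult A B carrier_basis carrier_rule R_in eqN_refl)
  also have "eqN N \<dots> (PL a * Rl x * sc Q (PL b))"
    using assms by (intro eqN_mult eqN_sc Inv_basis eqN_refl)
  finally show ?thesis .
qed

lemma G_qder_word: assumes "Inv N" shows "eqN N (G (qder_word R \<rho> w)) (Phi w)"
  unfolding qder_word_def Phi_def G_sum
  using assms by (intro eqN_sum term_G)

lemma Phi_Nil[simp]: "Phi [] = 0" by (simp add: Phi_def)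

lemma Phi_Cons: "Phi (x # w) = Rl x * sc Q (PL w) + L x * Phi w"
  unfolding Phi_def
  by (simp add: sum.lessThan_Suc_shift PL_Cons sum_distrib_left mult.assoc del: sum.lessThan_Suc)

lemma dq_L: assumes "Inv N" shows "eqN N (dq Q (L x)) (Rl x)"
proof -
  have "dq Q (L x) = G (qder_word R \<rho> [x])"
    by (simp add: L_def G_dq qder_basis fx_def)
  also have "eqN N \<dots> (Phi [x])" using assms by (rule G_qder_word)
  also have "Phi [x] = Rl x" by (simp add: Phi_Cons)
  finally show ?thesis .
qed

lemma Phi_dq: assumes "Inv N" shows "eqN N (Phi w) (dq Q (PL w))"
proof (induction w)
  case Nil then show ?case by simp
next
  case (Cons x w)
  have "Phi (x # w) = Rl x * sc Q (PL w) + L x * Phi w" by (rule Phi_Cons)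
  also have "eqN N \<dots> (dq Q (L x) * sc Q (PL w) + L x * dq Q (PL w))"
    using assms Cons by (intro eqN_add eqN_mult eqN_refl eqN_sym[OF dq_L])
  also have "\<dots> = dq Q (PL (x # w))" by (simp add: PL_Cons dq_mult)
  finally show ?case .
qed

lemma cancel1: assumes "Inv N" shows "eqN N (L x * L (inv_letter x)) 1"
proof -
  have "basis [x, inv_letter x] = basis []"
    by (simp add: basis_def fx_def)
  then have "L x * L (inv_letter x) = PL [x, inv_letter x]" by (simp add: PL_def)
  also have "eqN N \<dots> (G (basis [x, inv_letter x]))" using assms by (intro eqN_sym[OF Inv_basis])
  also have "G (basis [x, inv_letter x]) = G (basis [])" by (simp add: basis_def fx_def)
  also have "eqN N \<dots> (PL [])" using assms by (rule Inv_basis)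
  finally show ?thesis by simp
qed

lemma cancel2: assumes "Inv N" shows "eqN N (dq Q (L x * L (inv_letter x))) 0"
proof -
  obtain s i b where x: "x = (s, i, b)" by (cases x) auto
  let ?r = "G (R s i)"
  have "dq Q (L x * L (inv_letter x)) = dq Q (L x) * sc Q (L (inv_letter x)) + L x * dq Q (L (inv_letter x))"
    by (rule dq_mult)
  also have "eqN N \<dots> (Rl x * sc Q (L (inv_letter x)) + L x * Rl (inv_letter x))"
    using assms by (intro eqN_add eqN_mult eqN_refl dq_L)
  also have "eqN N \<dots> 0"
  proof (cases b)
    case True
    let ?y = "(s, i, False)"
    have "Rl x * sc Q (L (inv_letter x)) + L x * Rl (inv_letter x) = ?r * sc Q (L ?y) + L x * Rl ?y"
      using x True by (simp add: Rl_True)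
    also have "eqN N \<dots> (?r * sc Q (L ?y) + L x * (- (L ?y * ?r * sc Q (L ?y))))"
      using assms by (intro eqN_add eqN_mult eqN_refl Rl_False)
    also have "\<dots> = ?r * sc Q (L ?y) * (1 - L x * L (inv_letter x))"
      using x True by (simp add: algebra_simps)
    also have "eqN N \<dots> (?r * sc Q (L ?y) * (1 - 1))"
      using assms by (intro eqN_mult eqN_refl eqN_diff cancel1)
    finally show ?thesis by simp
  next
    case False
    let ?y = "(s, i, True)"
    have "Rl x * sc Q (L (inv_letter x)) + L x * Rl (inv_letter x) = Rl x * sc Q (L ?y) + L x * ?r"
      using x False by (simp add: Rl_True)
    also have "eqN N \<dots> (- (L x * ?r * sc Q (L x)) * sc Q (L ?y) + L x * ?r)"
      using assms x False by (intro eqN_add eqN_mult eqN_refl) (simp_all add: Rl_False)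
    also have "\<dots> = L x * ?r * (1 - sc Q (L x * L (inv_letter x)))"
      using x False by (simp add: algebra_simps sc_mult)
    also have "eqN N \<dots> (L x * ?r * (1 - sc Q 1))"
      using assms by (intro eqN_mult eqN_refl eqN_diff eqN_sc cancel1)
    finally show ?thesis by simp
  qed
  finally show ?thesis .
qed

end


context qg
begin

lemma basis_red: "basis (red w) = basis w"
  by (simp add: basis_def)

lemma PL_red: assumes "Inv N" shows "eqN N (PL (red w)) (PL w)"
proof -
  have "eqN N (PL (red w)) (G (basis (red w)))" using assms by (intro eqN_sym[OF Inv_basis])
  also have "G (basis (red w)) = G (basis w)" by (simp add: basis_red)
  also have "eqN N \<dots> (PL w)" using assms by (rule Inv_basis)
  finally show ?thesis .
qed

lemma dq_fx: assumes "Inv N" shows "eqN N (dq Q (PL (fx x z))) (dq Q (PL (x # z)))"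
proof (cases z)
  case (Cons y ys)
  show ?thesis
  proof (cases "y = inv_letter x")
    case True
    have "dq Q (PL (x # z)) = dq Q ((L x * L (inv_letter x)) * PL ys)"
      using Cons True by (simp add: PL_Cons mult.assoc)
    also have "\<dots> = dq Q (L x * L (inv_letter x)) * sc Q (PL ys) + (L x * L (inv_letter x)) * dq Q (PL ys)"
      by (rule dq_mult)
    also have "eqN N \<dots> (0 * sc Q (PL ys) + 1 * dq Q (PL ys))"
      using assms by (intro eqN_add eqN_mult eqN_refl cancel1 cancel2)
    also have "\<dots> = dq Q (PL (fx x z))" using Cons True by (simp add: fx_def)
    finally show ?thesis by (rule eqN_sym)
  qed (use Cons in \<open>simp add: fx_def\<close>)
qed (simp add: fx_def)

lemma red_dq: assumes "Inv N" shows "eqN N (dq Q (PL (red w))) (dq Q (PL w))"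
proof (induction w)
  case Nil then show ?case by simp
next
  case (Cons x w)
  have "dq Q (PL (red (x # w))) = dq Q (PL (fx x (red w)))" by simp
  also have "eqN N \<dots> (dq Q (PL (x # red w)))" using assms by (rule dq_fx)
  also have "\<dots> = dq Q (L x) * sc Q (PL (red w)) + L x * dq Q (PL (red w))"
    by (simp add: PL_Cons dq_mult)
  also have "eqN N \<dots> (dq Q (L x) * sc Q (PL w) + L x * dq Q (PL w))"
    using assms Cons by (intro eqN_add eqN_mult eqN_refl eqN_sc PL_red)
  also have "\<dots> = dq Q (PL (x # w))" by (simp add: PL_Cons dq_mult)
  finally show ?case .
qed

lemma dq_G_basis: assumes "Inv N" shows "eqN N (dq Q (G (basis w))) (dq Q (PL w))"
proof -
  have "dq Q (G (basis w)) = G (qder_word R \<rho> (red w))" by (simp add: G_dq qder_basis)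
  also have "eqN N \<dots> (Phi (red w))" using assms by (rule G_qder_word)
  also have "eqN N \<dots> (dq Q (PL (red w)))" using assms by (rule Phi_dq)
  also have "eqN N \<dots> (dq Q (PL w))" using assms by (rule red_dq)
  finally show ?thesis .
qed

lemma L0: "L x $ 0 = eval_letter \<phi> x"
  by (simp add: L_def G_nth0 ev_basis eval_word_Cons)

lemma PL0: "PL w $ 0 = eval_word \<phi> w"
  by (simp add: PL_def prod_list_nth0 L0 eval_word_def)

lemma Gb0: "G (basis w) $ 0 = eval_word \<phi> w"
  by (simp add: G_nth0 ev_basis)

lemma Inv_0: "Inv 0"
  unfolding Inv_def eqN_0 by (simp add: Gb0 PL0 L0 eval_letter_upl)

lemma Inv_Suc: assumes "Inv N" shows "Inv (Suc N)"
  unfolding Inv_def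
proof (intro conjI allI)
  fix w
  show "eqN (Suc N) (G (basis w)) (PL w)"
    by (rule eqN_SucI[OF inv_factor]) (simp_all add: Gb0 PL0 dq_G_basis[OF assms])
next
  fix x
  have "eqN N (dq Q (L (upl x))) (Rl (upl x))" using assms by (rule dq_L)
  also have "eqN N \<dots> (fps_const Q * sc Q (Rl x))" using assms by (rule Rl_upl)
  also have "eqN N \<dots> (fps_const Q * sc Q (dq Q (L x)))"
    using assms by (intro eqN_cmult eqN_sc eqN_sym[OF dq_L])
  also have "\<dots> = dq Q (sc Q (L x))" by (simp add: dq_sc)
  finally have d: "eqN N (dq Q (L (upl x))) (dq Q (sc Q (L x)))" .
  show "eqN (Suc N) (L (upl x)) (sc Q (L x))"
    by (rule eqN_SucI[OF inv_factor]) (simp_all add: L0 eval_letter_upl d)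
qed

lemma Inv_all: "Inv N"
  by (induction N) (simp_all add: Inv_0 Inv_Suc)

lemma main: assumes "f \<in> galg_carrier" "g \<in> galg_carrier"
  shows "G (emul f g) = G f * G g"
  by (rule eqN_all) (use assms Inv_all A in blast)

end

theorem theorem4p14:
  fixes R :: "'s \<Rightarrow> nat \<Rightarrow> ('s, 'k::{comm_ring_1, ring_char_0}) galg"
    and \<rho> :: "'s letter list \<Rightarrow> 's letter list"
    and \<iota> :: "'k poly \<Rightarrow> 'v::comm_ring_1"
    and \<phi> :: "'s \<Rightarrow> nat \<Rightarrow> 'v"
    and f g :: "('s, 'k) galg"
  assumes R_in: "\<And>s i. R s i \<in> galg_carrier"
    and order: "is_order \<rho>"
    and R_up: "\<And>s i. R s (Suc i) = escale qvar (up (R s i))"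
    and V: "embeds_Kq \<iota>"
    and units_qpoch: "\<And>n. invertible_el (\<iota> (qpoch n))"
    and phi_units: "\<And>s i. invertible_el (\<phi> s i)"
    and ml: "master_linear \<phi>"
    and f: "f \<in> galg_carrier" and g: "g \<in> galg_carrier"
  shows "eval_gen \<iota> \<phi> R \<rho> (emul f g) = eval_gen \<iota> \<phi> R \<rho> f * eval_gen \<iota> \<phi> R \<rho> g"
proof -
  interpret qg R \<rho> \<iota> \<phi>
    by (unfold_locales) (fact R_in order R_up V units_qpoch phi_units ml)+
  show ?thesis using f g by (rule main)
qed


end
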